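(* Fix a monomial order on $S$. Let $J$ be an ideal of $S$ and let $(E_i)_{i\in\Lambda}$ be an arbitrary (nonempty) family of monomial ideals of $S$ such that $(J,E_i)$ is a G-nice pair for every $i\in\Lambda$. Put $E=\bigcap_{i\in\Lambda}E_i$. Then $(J,E)$ is a G-nice pair and $\bigcap_{i\in\Lambda}(J+E_i)=J+E$. Moreover, if $\mathcal G_J$ is a Gröbner basis of $J$, then $\mathcal G_J\cup G(E)$ is a Gröbner basis of $\bigcap_{i\in\Lambda}(J+E_i)$.
   Context: $K$ is a field and $S=K[x_1,\ldots,x_n]$ with a fixed monomial order. For $0\neq f\in S$, $\mathrm{in}(f)$ denotes its leading monomial; for an ideal $I$, $\mathrm{in}(I)$ is the ideal generated by the leading monomials of the nonzero elements of $I$. A pair $(J,E)$ of ideals of $S$ is called Gröbner nice (G-nice) if $\mathrm{in}(J+E)=\mathrm{in}(J)+\mathrm{in}(E)$. For a monomial ideal $E$, $G(E)$ denotes its unique minimal set of monomial generators. *)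

theory Defs
  imports "HOL-Library.Poly_Mapping"
begin

(* Monomials in the variables of the finite type 'v are exponent vectors 'v \<Rightarrow>\<^sub>0 nat;
   polynomials over the field 'a are finitely supported maps from monomials to 'a,
   i.e. the type ('v \<Rightarrow>\<^sub>0 nat) \<Rightarrow>\<^sub>0 'a with convolution product: S = K[x_v | v \<in> 'v]. *)

type_synonym 'v monom = "'v \<Rightarrow>\<^sub>0 nat"
type_synonym ('v, 'a) mpoly = "('v \<Rightarrow>\<^sub>0 nat) \<Rightarrow>\<^sub>0 'a"

definition monomial_order :: "('v monom \<Rightarrow> 'v monom \<Rightarrow> bool) \<Rightarrow> bool" where
  "monomial_order ord \<longleftrightarrow>
     (\<forall>a. ord a a) \<and>
     (\<forall>a b. ord a b \<and> ord b a \<longrightarrow> a = b) \<and>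
     (\<forall>a b c. ord a b \<and> ord b c \<longrightarrow> ord a c) \<and>
     (\<forall>a b. ord a b \<or> ord b a) \<and>
     (\<forall>a. ord 0 a) \<and>
     (\<forall>a b c. ord a b \<longrightarrow> ord (a + c) (b + c))"

definition is_ideal :: "('v, 'a::comm_ring_1) mpoly set \<Rightarrow> bool" where
  "is_ideal I \<longleftrightarrow> 0 \<in> I \<and> (\<forall>f\<in>I. \<forall>g\<in>I. f + g \<in> I) \<and> (\<forall>r. \<forall>f\<in>I. r * f \<in> I)"

definition ideal_gen :: "('v, 'a::comm_ring_1) mpoly set \<Rightarrow> ('v, 'a) mpoly set" where
  "ideal_gen X = \<Inter> {I. is_ideal I \<and> X \<subseteq> I}"

definition ideal_sum :: "('v, 'a::comm_ring_1) mpoly set \<Rightarrow> ('v, 'a) mpoly set \<Rightarrow> ('v, 'a) mpoly set" where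
  "ideal_sum I J = {f + g | f g. f \<in> I \<and> g \<in> J}"

definition monom_poly :: "'v monom \<Rightarrow> ('v, 'a::comm_ring_1) mpoly" where
  "monom_poly u = Poly_Mapping.single u 1"

definition lead_monom :: "('v monom \<Rightarrow> 'v monom \<Rightarrow> bool) \<Rightarrow> ('v, 'a::comm_ring_1) mpoly \<Rightarrow> 'v monom" where
  "lead_monom ord f = (THE m. m \<in> Poly_Mapping.keys f \<and> (\<forall>m'\<in>Poly_Mapping.keys f. ord m' m))"

definition init_ideal :: "('v monom \<Rightarrow> 'v monom \<Rightarrow> bool) \<Rightarrow> ('v, 'a::comm_ring_1) mpoly set \<Rightarrow> ('v, 'a) mpoly set" where
  "init_ideal ord I = ideal_gen {monom_poly (lead_monom ord f) | f. f \<in> I \<and> f \<noteq> 0}"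

definition monomial_ideal :: "('v, 'a::comm_ring_1) mpoly set \<Rightarrow> bool" where
  "monomial_ideal E \<longleftrightarrow> (\<exists>U. E = ideal_gen (monom_poly ` U))"

definition g_nice :: "('v monom \<Rightarrow> 'v monom \<Rightarrow> bool) \<Rightarrow> ('v, 'a::comm_ring_1) mpoly set \<Rightarrow> ('v, 'a) mpoly set \<Rightarrow> bool" where
  "g_nice ord J E \<longleftrightarrow> init_ideal ord (ideal_sum J E) = ideal_sum (init_ideal ord J) (init_ideal ord E)"

definition monom_dvd :: "'v monom \<Rightarrow> 'v monom \<Rightarrow> bool" where
  "monom_dvd v u \<longleftrightarrow> (\<forall>x. Poly_Mapping.lookup v x \<le> Poly_Mapping.lookup u x)"

definition min_gens :: "('v, 'a::comm_ring_1) mpoly set \<Rightarrow> ('v, 'a) mpoly set" where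
  "min_gens E = {monom_poly u | u. monom_poly u \<in> E \<and>
                    (\<forall>v. monom_poly v \<in> E \<and> monom_dvd v u \<longrightarrow> v = u)}"

definition groebner_basis :: "('v monom \<Rightarrow> 'v monom \<Rightarrow> bool) \<Rightarrow> ('v, 'a::comm_ring_1) mpoly set \<Rightarrow> ('v, 'a) mpoly set \<Rightarrow> bool" where
  "groebner_basis ord G I \<longleftrightarrow> finite G \<and> G \<subseteq> I \<and>
     ideal_gen {monom_poly (lead_monom ord g) | g. g \<in> G \<and> g \<noteq> 0} = init_ideal ord I"

end

theory Submission
  imports Defs
begin


lemma lookup_single_mult_shift:
  fixes g :: "('v, 'a::field) mpoly"
  shows "Poly_Mapping.lookup (Poly_Mapping.single s c * g) (s + w) = c * Poly_Mapping.lookup g w"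
proof -
  have "Poly_Mapping.lookup (Poly_Mapping.single s c * g) (s + w) =
        (\<Sum>l. (c when s = l) * (\<Sum>q. Poly_Mapping.lookup g q when s + w = l + q))"
    by (simp add: lookup_mult lookup_single)
  also have "\<dots> = (\<Sum>l. (c * (\<Sum>q. Poly_Mapping.lookup g q when s + w = l + q)) when s = l)"
    by (simp add: when_mult)
  also have "\<dots> = c * (\<Sum>q. Poly_Mapping.lookup g q when s + w = s + q)" by simp
  also have "(\<Sum>q. Poly_Mapping.lookup g q when s + w = s + q) = (\<Sum>q. Poly_Mapping.lookup g q when w = q)"
    by (simp add: add_left_cancel)
  also have "\<dots> = Poly_Mapping.lookup g w" by simp
  finally show ?thesis .
qed

lemma keys_single_mult:
  fixes g :: "('v, 'a::field) mpoly"
  shows "Poly_Mapping.keys (Poly_Mapping.single s c * g) \<subseteq> (\<lambda>b. s + b) ` Poly_Mapping.keys g"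
  using keys_mult[of "Poly_Mapping.single s c" g] by (auto split: if_splits)

lemma poly_sum_monoms:
  fixes f :: "('v, 'a::field) mpoly"
  shows "(\<Sum>w\<in>Poly_Mapping.keys f. Poly_Mapping.single w (Poly_Mapping.lookup f w)) = f"
proof (rule poly_mapping_eqI)
  fix k
  show "Poly_Mapping.lookup (\<Sum>w\<in>Poly_Mapping.keys f. Poly_Mapping.single w (Poly_Mapping.lookup f w)) k = Poly_Mapping.lookup f k"
    by (simp add: lookup_sum lookup_single when_def in_keys_iff)
qed


lemma nat_seq_mono_sub:
  fixes s :: "nat \<Rightarrow> nat"
  shows "\<exists>g::nat\<Rightarrow>nat. strict_mono g \<and> (\<forall>i j. i \<le> j \<longrightarrow> s (g i) \<le> s (g j))"
proof -
  define h where "h = (\<lambda>k. SOME n. n > k \<and> (\<forall>m. m > k \<longrightarrow> s n \<le> s m))"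
  have h: "h k > k \<and> (\<forall>m. m > k \<longrightarrow> s (h k) \<le> s m)" for k
  proof -
    have "\<exists>n. n > k \<and> (\<forall>m. m > k \<longrightarrow> s n \<le> s m)"
      using ex_has_least_nat[of "\<lambda>n. n > k" "Suc k" s] by auto
    then show ?thesis unfolding h_def by (rule someI_ex)
  qed
  define g where "g = rec_nat (h 0) (\<lambda>_ x. h x)"
  have g0: "g 0 = h 0" and gS: "g (Suc k) = h (g k)" for k by (simp_all add: g_def)
  have inc: "g k < g (Suc k)" for k using h[of "g k"] gS by simp
  have minp: "\<forall>m. m > g k \<longrightarrow> s (g k) \<le> s m" for k
  proof (cases k)
    case 0 then show ?thesis using h[of 0] g0 by auto
  next
    case (Suc k')
    have "g k' < g k" using inc[of k'] Suc by simp
    then show ?thesis using h[of "g k'"] gS Suc by auto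
  qed
  have sm: "strict_mono g" using inc by (simp add: strict_mono_Suc_iff)
  have mono: "\<And>k. s (g k) \<le> s (g (Suc k))" using minp inc by blast
  have "\<forall>i j. i \<le> j \<longrightarrow> s (g i) \<le> s (g j)"
  proof (intro allI impI)
    fix i j :: nat assume "i \<le> j"
    show "s (g i) \<le> s (g j)" by (rule lift_Suc_mono_le[of "\<lambda>k. s (g k)", OF mono \<open>i \<le> j\<close>])
  qed
  with sm show ?thesis by blast
qed

lemma dickson_aux:
  fixes m :: "nat \<Rightarrow> 'v monom"
  assumes "finite V"
  shows "\<exists>f::nat\<Rightarrow>nat. strict_mono f \<and> (\<forall>i j. i \<le> j \<longrightarrow> (\<forall>x\<in>V. Poly_Mapping.lookup (m (f i)) x \<le> Poly_Mapping.lookup (m (f j)) x))"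
  using assms
proof (induction V rule: finite_induct)
  case empty
  show ?case by (rule exI[of _ "id::nat\<Rightarrow>nat"]) (simp add: strict_mono_def)
next
  case (insert x V)
  obtain f :: "nat \<Rightarrow> nat" where f: "strict_mono f" "\<forall>i j. i \<le> j \<longrightarrow> (\<forall>x\<in>V. Poly_Mapping.lookup (m (f i)) x \<le> Poly_Mapping.lookup (m (f j)) x)"
    using insert.IH by blast
  obtain g :: "nat \<Rightarrow> nat" where g: "strict_mono g" "\<forall>i j. i \<le> j \<longrightarrow> Poly_Mapping.lookup (m (f (g i))) x \<le> Poly_Mapping.lookup (m (f (g j))) x"
    using nat_seq_mono_sub[of "\<lambda>n. Poly_Mapping.lookup (m (f n)) x"] by blast
  have "strict_mono (f \<circ> g)" using f(1) g(1) by (simp add: strict_mono_def)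
  moreover have "\<forall>i j. i \<le> j \<longrightarrow> (\<forall>y\<in>insert x V. Poly_Mapping.lookup (m ((f \<circ> g) i)) y \<le> Poly_Mapping.lookup (m ((f \<circ> g) j)) y)"
  proof (intro allI impI ballI)
    fix i j :: nat and y assume ij: "i \<le> j" and y: "y \<in> insert x V"
    have "g i \<le> g j" using g(1) ij by (simp add: strict_mono_less_eq)
    show "Poly_Mapping.lookup (m ((f \<circ> g) i)) y \<le> Poly_Mapping.lookup (m ((f \<circ> g) j)) y"
    proof (cases "y = x")
      case True then show ?thesis using g(2)[rule_format, OF ij] by simp
    next
      case False then have "y \<in> V" using y by simp
      then show ?thesis using f(2)[rule_format, OF \<open>g i \<le> g j\<close> \<open>y \<in> V\<close>] by simp
    qed
  qed
  ultimately show ?case by (intro exI[of _ "f \<circ> g"] conjI)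
qed

lemma dickson:
  fixes m :: "nat \<Rightarrow> ('v::finite) monom"
  shows "\<exists>i j. i < j \<and> monom_dvd (m i) (m j)"
proof -
  obtain f :: "nat \<Rightarrow> nat" where f: "strict_mono f" "\<forall>i j. i \<le> j \<longrightarrow> (\<forall>x\<in>UNIV. Poly_Mapping.lookup (m (f i)) x \<le> Poly_Mapping.lookup (m (f j)) x)"
    using dickson_aux[of "UNIV :: 'v set" m] by (auto intro: that)
  have "f 0 < f 1" using f(1) by (simp add: strict_mono_def)
  moreover have "monom_dvd (m (f 0)) (m (f 1))" using f(2)[rule_format, of 0 1] unfolding monom_dvd_def by simp
  ultimately show ?thesis by blast
qed



lemma mo_props:
  assumes "monomial_order ord"
  shows "ord a a" "ord a b \<Longrightarrow> ord b a \<Longrightarrow> a = b" "ord a b \<Longrightarrow> ord b c \<Longrightarrow> ord a c"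
    "ord a b \<or> ord b a" "ord 0 a" "ord a b \<Longrightarrow> ord (a + c) (b + c)"
  using assms unfolding monomial_order_def by blast+

lemma dvd_diff_add:
  assumes "monom_dvd u w"
  shows "(w - u) + u = w"
proof (rule poly_mapping_eqI)
  fix x
  show "Poly_Mapping.lookup (w - u + u) x = Poly_Mapping.lookup w x"
    using assms unfolding monom_dvd_def by (simp add: lookup_add lookup_minus)
qed

lemma monom_dvd_add: "monom_dvd u b \<Longrightarrow> monom_dvd u (a + b)"
  unfolding monom_dvd_def by (simp add: lookup_add add_increasing)

lemma monom_dvd_trans: "monom_dvd u v \<Longrightarrow> monom_dvd v w \<Longrightarrow> monom_dvd u w"
  unfolding monom_dvd_def using order_trans by blast

lemma monom_dvd_refl: "monom_dvd u u"
  unfolding monom_dvd_def by simp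

lemma monom_dvd_ord:
  assumes "monomial_order ord" "monom_dvd u w"
  shows "ord u w"
proof -
  have "ord (0 + u) ((w - u) + u)" using mo_props(6)[OF assms(1) mo_props(5)[OF assms(1)]] .
  then show ?thesis using dvd_diff_add[OF assms(2)] by simp
qed

lemma ord_wf:
  fixes ord :: "('v::finite) monom \<Rightarrow> 'v monom \<Rightarrow> bool"
  assumes mo: "monomial_order ord"
  shows "wf {(a, b). ord a b \<and> a \<noteq> b}"
proof (rule ccontr)
  assume "\<not> ?thesis"
  then obtain f where f: "\<And>i. ord (f (Suc i)) (f i) \<and> f (Suc i) \<noteq> f i"
    unfolding wf_iff_no_infinite_down_chain by auto
  have chain: "ord (f (i + Suc k)) (f i) \<and> f (i + Suc k) \<noteq> f i" for i k
  proof (induction k)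
    case 0 then show ?case using f[of i] by simp
  next
    case (Suc k)
    have a: "ord (f (Suc (i + Suc k))) (f (i + Suc k))" "f (Suc (i + Suc k)) \<noteq> f (i + Suc k)"
      using f[of "i + Suc k"] by simp_all
    have "ord (f (i + Suc (Suc k))) (f i)" using mo_props(3)[OF mo a(1) conjunct1[OF Suc.IH]] by simp
    moreover have "f (i + Suc (Suc k)) \<noteq> f i"
    proof
      assume eq: "f (i + Suc (Suc k)) = f i"
      then have "ord (f i) (f (i + Suc k))" using a(1) eq by simp
      then have "f i = f (i + Suc k)" using conjunct1[OF Suc.IH] mo_props(2)[OF mo, of "f i" "f (i + Suc k)"] by blast
      then show False using conjunct2[OF Suc.IH] by simp
    qed
    ultimately show ?case by (intro conjI)
  qed
  obtain i j where ij: "i < j" "monom_dvd (f i) (f j)" using dickson[of f] by blast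
  then obtain k where k: "j = i + Suc k" using less_iff_Suc_add[of i j] by auto
  have "ord (f i) (f j)" using monom_dvd_ord[OF mo ij(2)] .
  moreover have "ord (f j) (f i)" "f j \<noteq> f i" using chain[of i k] k by auto
  ultimately show False using mo_props(2)[OF mo, of "f i" "f j"] by auto
qed

lemma finite_has_max:
  assumes mo: "monomial_order ord" and "finite S" "S \<noteq> {}"
  shows "\<exists>m\<in>S. \<forall>m'\<in>S. ord m' m"
  using assms(2,3)
proof (induction S rule: finite_ne_induct)
  case (singleton x) then show ?case using mo_props(1)[OF mo] by auto
next
  case (insert x F)
  then obtain m where m: "m \<in> F" "\<forall>m'\<in>F. ord m' m" by blast
  show ?case
  proof (cases "ord m x")
    case True
    have "\<forall>m'\<in>insert x F. ord m' x"
    proof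
      fix m' assume "m' \<in> insert x F"
      then show "ord m' x"
      proof
        assume "m' = x" then show ?thesis using mo_props(1)[OF mo, of x] by simp
      next
        assume "m' \<in> F" then have "ord m' m" using m(2) by blast
        then show ?thesis using mo_props(3)[OF mo _ True] by blast
      qed
    qed
    then show ?thesis by blast
  next
    case False
    then have "ord x m" using mo_props(4)[OF mo, of m x] by blast
    then show ?thesis using m by blast
  qed
qed

lemma lead_unique:
  assumes mo: "monomial_order ord" and "m \<in> Poly_Mapping.keys f" "\<forall>m'\<in>Poly_Mapping.keys f. ord m' m"
  shows "lead_monom ord f = m"
  unfolding lead_monom_def
proof (rule the_equality)
  show "m \<in> Poly_Mapping.keys f \<and> (\<forall>m'\<in>Poly_Mapping.keys f. ord m' m)" using assms by blast
next
  fix m2 assume "m2 \<in> Poly_Mapping.keys f \<and> (\<forall>m'\<in>Poly_Mapping.keys f. ord m' m2)"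
  then show "m2 = m" using assms mo_props(2)[OF mo, of m2 m] by blast
qed



lemma lead_props:
  assumes mo: "monomial_order ord" and "f \<noteq> 0"
  shows "lead_monom ord f \<in> Poly_Mapping.keys f" "\<And>m. m \<in> Poly_Mapping.keys f \<Longrightarrow> ord m (lead_monom ord f)"
proof -
  have "Poly_Mapping.keys f \<noteq> {}" using assms(2) by simp
  then obtain m where m: "m \<in> Poly_Mapping.keys f" "\<forall>m'\<in>Poly_Mapping.keys f. ord m' m"
    using finite_has_max[OF mo, of "Poly_Mapping.keys f"] by auto
  have "lead_monom ord f = m" using lead_unique[OF mo m] .
  then show "lead_monom ord f \<in> Poly_Mapping.keys f" "\<And>m'. m' \<in> Poly_Mapping.keys f \<Longrightarrow> ord m' (lead_monom ord f)"
    using m by auto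
qed

lemma keys_monom_poly [simp]: "Poly_Mapping.keys (monom_poly u :: ('v, 'a::field) mpoly) = {u}"
  by (simp add: monom_poly_def)

lemma monom_poly_nz [simp]: "(monom_poly u :: ('v, 'a::field) mpoly) \<noteq> 0"
  by (metis keys_monom_poly keys_zero empty_not_insert)

lemma lead_monom_poly:
  assumes "monomial_order ord"
  shows "lead_monom ord (monom_poly u :: ('v, 'a::field) mpoly) = u"
  by (rule lead_unique[OF assms]) (simp_all add: mo_props(1)[OF assms])

lemma monom_poly_inj: "(monom_poly u :: ('v, 'a::field) mpoly) = monom_poly v \<longleftrightarrow> u = v"
  by (metis keys_monom_poly singleton_inject)

lemma ideal_gen_ideal: "is_ideal (ideal_gen X)"
  unfolding ideal_gen_def is_ideal_def by blast

lemma ideal_gen_sub: "X \<subseteq> ideal_gen X"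
  unfolding ideal_gen_def by blast

lemma ideal_gen_least: "is_ideal I \<Longrightarrow> X \<subseteq> I \<Longrightarrow> ideal_gen X \<subseteq> I"
  unfolding ideal_gen_def by blast

lemma ideal_gen_mono: "X \<subseteq> Y \<Longrightarrow> ideal_gen X \<subseteq> ideal_gen Y"
  unfolding ideal_gen_def by blast

lemma ideal_0: "is_ideal I \<Longrightarrow> 0 \<in> I" unfolding is_ideal_def by blast
lemma ideal_add: "is_ideal I \<Longrightarrow> f \<in> I \<Longrightarrow> g \<in> I \<Longrightarrow> f + g \<in> I" unfolding is_ideal_def by blast
lemma ideal_mult: "is_ideal I \<Longrightarrow> f \<in> I \<Longrightarrow> r * f \<in> I" unfolding is_ideal_def by blast

lemma ideal_uminus:
  fixes f :: "('v, 'a::field) mpoly"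
  shows "is_ideal I \<Longrightarrow> f \<in> I \<Longrightarrow> - f \<in> I"
  using ideal_mult[of I f "-1"] by simp

lemma ideal_diff:
  fixes f :: "('v, 'a::field) mpoly"
  shows "is_ideal I \<Longrightarrow> f \<in> I \<Longrightarrow> g \<in> I \<Longrightarrow> f - g \<in> I"
  using ideal_add[of I f "- g"] ideal_uminus[of I g] by simp

lemma ideal_sum_closed:
  fixes g :: "'b \<Rightarrow> ('v, 'a::field) mpoly"
  assumes "is_ideal I" "finite A" "\<And>a. a \<in> A \<Longrightarrow> g a \<in> I"
  shows "sum g A \<in> I"
  using assms(2,3)
proof (induction A rule: finite_induct)
  case empty then show ?case using ideal_0[OF assms(1)] by simp
next
  case (insert x F) then show ?case using ideal_add[OF assms(1)] by simp
qed

lemma ideal_Inter: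
  fixes Es :: "'i \<Rightarrow> ('v, 'a::field) mpoly set"
  assumes H: "\<And>i. i \<in> L \<Longrightarrow> is_ideal (Es i)"
  shows "is_ideal (\<Inter>i\<in>L. Es i)"
  unfolding is_ideal_def
proof (intro conjI ballI allI)
  show "0 \<in> (\<Inter>i\<in>L. Es i)" using ideal_0[OF H] by blast
next
  fix f g assume "f \<in> (\<Inter>i\<in>L. Es i)" "g \<in> (\<Inter>i\<in>L. Es i)"
  then show "f + g \<in> (\<Inter>i\<in>L. Es i)" using ideal_add[OF H] by blast
next
  fix r f assume "f \<in> (\<Inter>i\<in>L. Es i)"
  then show "r * f \<in> (\<Inter>i\<in>L. Es i)" using ideal_mult[OF H] by blast
qed



lemma is_ideal_sum:
  fixes J E :: "('v, 'a::field) mpoly set"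
  assumes "is_ideal J" "is_ideal E"
  shows "is_ideal (ideal_sum J E)"
  unfolding is_ideal_def
proof (intro conjI ballI allI)
  show "0 \<in> ideal_sum J E" unfolding ideal_sum_def
    using ideal_0[OF assms(1)] ideal_0[OF assms(2)] by force
next
  fix a b assume "a \<in> ideal_sum J E" "b \<in> ideal_sum J E"
  then obtain f1 g1 f2 g2 where fg: "a = f1 + g1" "b = f2 + g2" "f1 \<in> J" "g1 \<in> E" "f2 \<in> J" "g2 \<in> E"
    unfolding ideal_sum_def by blast
  have "a + b = (f1 + f2) + (g1 + g2)" using fg(1,2) by (simp add: algebra_simps)
  moreover have "f1 + f2 \<in> J" using ideal_add[OF assms(1) fg(3,5)] .
  moreover have "g1 + g2 \<in> E" using ideal_add[OF assms(2) fg(4,6)] .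
  ultimately show "a + b \<in> ideal_sum J E" unfolding ideal_sum_def by blast
next
  fix r a assume "a \<in> ideal_sum J E"
  then obtain f1 g1 where fg: "a = f1 + g1" "f1 \<in> J" "g1 \<in> E" unfolding ideal_sum_def by blast
  have "r * a = r * f1 + r * g1" using fg(1) by (simp add: algebra_simps)
  moreover have "r * f1 \<in> J" using ideal_mult[OF assms(1) fg(2)] .
  moreover have "r * g1 \<in> E" using ideal_mult[OF assms(2) fg(3)] .
  ultimately show "r * a \<in> ideal_sum J E" unfolding ideal_sum_def by blast
qed

lemma ideal_sum_left: "is_ideal E \<Longrightarrow> J \<subseteq> ideal_sum J E"
  unfolding ideal_sum_def using ideal_0 by force

lemma ideal_sum_right: "is_ideal J \<Longrightarrow> E \<subseteq> ideal_sum J E"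
  unfolding ideal_sum_def using ideal_0 by force

lemma ideal_sum_mono: "E \<subseteq> E' \<Longrightarrow> ideal_sum J E \<subseteq> ideal_sum J E'"
  unfolding ideal_sum_def by blast

definition mideal :: "'v monom set \<Rightarrow> ('v, 'a::field) mpoly set" where
  "mideal U = {f. \<forall>w\<in>Poly_Mapping.keys f. \<exists>u\<in>U. monom_dvd u w}"

lemma mideal_ideal: "is_ideal (mideal U :: ('v, 'a::field) mpoly set)"
  unfolding is_ideal_def
proof (intro conjI ballI allI)
  show "0 \<in> mideal U" unfolding mideal_def by simp
next
  fix f g :: "('v, 'a) mpoly" assume f: "f \<in> mideal U" and g: "g \<in> mideal U"
  show "f + g \<in> mideal U" unfolding mideal_def
  proof (intro CollectI ballI)
    fix w assume "w \<in> Poly_Mapping.keys (f + g)"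
    then have "w \<in> Poly_Mapping.keys f \<or> w \<in> Poly_Mapping.keys g" using keys_add[of f g] by blast
    then show "\<exists>u\<in>U. monom_dvd u w" using f g unfolding mideal_def by blast
  qed
next
  fix r f :: "('v, 'a) mpoly" assume f: "f \<in> mideal U"
  show "r * f \<in> mideal U" unfolding mideal_def
  proof (intro CollectI ballI)
    fix w assume "w \<in> Poly_Mapping.keys (r * f)"
    then obtain a b where ab: "w = a + b" "b \<in> Poly_Mapping.keys f" using keys_mult[of r f] by blast
    then obtain u where "u \<in> U" "monom_dvd u b" using f unfolding mideal_def by blast
    then show "\<exists>u\<in>U. monom_dvd u w" using ab(1) monom_dvd_add by blast
  qed
qed

lemma mideal_monom: "(monom_poly w :: ('v, 'a::field) mpoly) \<in> mideal U \<longleftrightarrow> (\<exists>u\<in>U. monom_dvd u w)"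
  unfolding mideal_def by simp

lemma mideal_keys: "(f :: ('v, 'a::field) mpoly) \<in> mideal U \<longleftrightarrow> (\<forall>w\<in>Poly_Mapping.keys f. (monom_poly w :: ('v, 'a) mpoly) \<in> mideal U)"
  unfolding mideal_def by simp

lemma ideal_gen_monoms: "ideal_gen (monom_poly ` U :: ('v, 'a::field) mpoly set) = mideal U"
proof
  have "monom_poly ` U \<subseteq> (mideal U :: ('v, 'a) mpoly set)"
  proof
    fix p :: "('v, 'a) mpoly" assume "p \<in> monom_poly ` U"
    then obtain u where "u \<in> U" "p = monom_poly u" by blast
    then show "p \<in> mideal U" using mideal_monom[of u U] monom_dvd_refl[of u] by blast
  qed
  then show "ideal_gen (monom_poly ` U) \<subseteq> (mideal U :: ('v, 'a) mpoly set)"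
    by (rule ideal_gen_least[OF mideal_ideal])
next
  show "mideal U \<subseteq> (ideal_gen (monom_poly ` U) :: ('v, 'a) mpoly set)"
  proof
    fix f :: "('v, 'a) mpoly" assume f: "f \<in> mideal U"
    have I: "is_ideal (ideal_gen (monom_poly ` U :: ('v, 'a::field) mpoly set))" by (rule ideal_gen_ideal)
    have "(\<Sum>w\<in>Poly_Mapping.keys f. Poly_Mapping.single w (Poly_Mapping.lookup f w)) \<in> ideal_gen (monom_poly ` U)"
    proof (rule ideal_sum_closed[OF I finite_keys])
      fix w assume w: "w \<in> Poly_Mapping.keys f"
      then obtain u where u: "u \<in> U" "monom_dvd u w" using f unfolding mideal_def by blast
      have "Poly_Mapping.single w (Poly_Mapping.lookup f w) = Poly_Mapping.single (w - u) (Poly_Mapping.lookup f w) * monom_poly u"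
        by (simp add: monom_poly_def mult_single dvd_diff_add[OF u(2)])
      moreover have "monom_poly u \<in> ideal_gen (monom_poly ` U)" using u(1) ideal_gen_sub by blast
      ultimately show "Poly_Mapping.single w (Poly_Mapping.lookup f w) \<in> ideal_gen (monom_poly ` U)"
        using ideal_mult[OF I] by simp
    qed
    then show "f \<in> ideal_gen (monom_poly ` U)" by (simp add: poly_sum_monoms)
  qed
qed

lemma mideal_sum_monom:
  assumes "(monom_poly w :: ('v, 'a::field) mpoly) \<in> ideal_sum (mideal U) (mideal V)"
  shows "(monom_poly w :: ('v, 'a) mpoly) \<in> mideal U \<or> (monom_poly w :: ('v, 'a) mpoly) \<in> mideal V"
proof -
  obtain f g :: "('v, 'a) mpoly" where fg: "monom_poly w = f + g" "f \<in> mideal U" "g \<in> mideal V"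
    using assms unfolding ideal_sum_def by blast
  have "Poly_Mapping.lookup f w + Poly_Mapping.lookup g w = 1"
    using arg_cong[OF fg(1), of "\<lambda>p. Poly_Mapping.lookup p w"] by (simp add: lookup_add monom_poly_def)
  then have "w \<in> Poly_Mapping.keys f \<or> w \<in> Poly_Mapping.keys g" by (auto simp: in_keys_iff)
  then show ?thesis
  proof
    assume "w \<in> Poly_Mapping.keys f"
    then have "\<exists>u\<in>U. monom_dvd u w" using fg(2) unfolding mideal_def by blast
    then show ?thesis unfolding mideal_monom by (rule disjI1)
  next
    assume "w \<in> Poly_Mapping.keys g"
    then have "\<exists>u\<in>V. monom_dvd u w" using fg(3) unfolding mideal_def by blast
    then show ?thesis unfolding mideal_monom by (rule disjI2)
  qed
qed

definition LT :: "('v monom \<Rightarrow> 'v monom \<Rightarrow> bool) \<Rightarrow> ('v, 'a::field) mpoly set \<Rightarrow> 'v monom set" where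
  "LT ord I = {lead_monom ord f | f. f \<in> I \<and> f \<noteq> 0}"

lemma init_ideal_mideal: "init_ideal ord (I :: ('v, 'a::field) mpoly set) = mideal (LT ord I)"
proof -
  have "{monom_poly (lead_monom ord f) | f. f \<in> I \<and> f \<noteq> 0} = (monom_poly ` LT ord I :: ('v, 'a) mpoly set)"
    unfolding LT_def by blast
  then show ?thesis unfolding init_ideal_def by (simp add: ideal_gen_monoms)
qed



definition NF :: "('v monom \<Rightarrow> 'v monom \<Rightarrow> bool) \<Rightarrow> ('v, 'a::field) mpoly set \<Rightarrow> ('v, 'a) mpoly \<Rightarrow> bool" where
  "NF ord J r \<longleftrightarrow> (\<forall>w\<in>Poly_Mapping.keys r. \<not> (\<exists>u\<in>LT ord J. monom_dvd u w))"

lemma normal_form_aux: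
  fixes J :: "('v::finite, 'a::field) mpoly set"
  assumes mo: "monomial_order ord" and J: "is_ideal J"
  shows "\<forall>f. f \<noteq> 0 \<longrightarrow> lead_monom ord f = t \<longrightarrow> (\<exists>r. f - r \<in> J \<and> NF ord J r)"
proof (induction t rule: wf_induct[OF ord_wf[OF mo]])
  case (1 t)
  have IH: "\<exists>r. h - r \<in> J \<and> NF ord J r" if h: "\<And>w. w \<in> Poly_Mapping.keys h \<Longrightarrow> ord w t \<and> w \<noteq> t" for h
  proof (cases "h = 0")
    case True
    then show ?thesis using ideal_0[OF J] by (intro exI[of _ 0]) (simp add: NF_def)
  next
    case False
    have "lead_monom ord h \<in> Poly_Mapping.keys h" using lead_props(1)[OF mo False] .
    then have "(lead_monom ord h, t) \<in> {(a, b). ord a b \<and> a \<noteq> b}" using h by blast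
    then show ?thesis using 1 False by blast
  qed
  show ?case
  proof (intro allI impI)
    fix f :: "('v, 'a) mpoly" assume fnz: "f \<noteq> 0" and lf: "lead_monom ord f = t"
    have tk: "t \<in> Poly_Mapping.keys f" using lead_props(1)[OF mo fnz] lf by simp
    have fle: "\<And>w. w \<in> Poly_Mapping.keys f \<Longrightarrow> ord w t" using lead_props(2)[OF mo fnz] lf by simp
    define c where "c = Poly_Mapping.lookup f t"
    have cnz: "c \<noteq> 0" using tk unfolding c_def by (simp add: in_keys_iff)
    show "\<exists>r. f - r \<in> J \<and> NF ord J r"
    proof (cases "\<exists>u\<in>LT ord J. monom_dvd u t")
      case True
      then obtain g u where g: "g \<in> J" "g \<noteq> 0" "u = lead_monom ord g" "monom_dvd u t"
        unfolding LT_def by blast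
      have uk: "u \<in> Poly_Mapping.keys g" using lead_props(1)[OF mo g(2)] g(3) by simp
      have gle: "\<And>b. b \<in> Poly_Mapping.keys g \<Longrightarrow> ord b u" using lead_props(2)[OF mo g(2)] g(3) by simp
      define s where "s = t - u"
      have tsu: "t = s + u" using dvd_diff_add[OF g(4)] unfolding s_def by (simp add: add.commute)
      define d where "d = c / Poly_Mapping.lookup g u"
      have gu: "Poly_Mapping.lookup g u \<noteq> 0" using uk by (simp add: in_keys_iff)
      define q where "q = Poly_Mapping.single s d * g"
      have qJ: "q \<in> J" unfolding q_def using ideal_mult[OF J g(1)] .
      define h where "h = f - q"
      have "Poly_Mapping.lookup q t = c"
        unfolding q_def tsu d_def using lookup_single_mult_shift[of s d g u] gu by (simp add: d_def)
      then have ht: "Poly_Mapping.lookup h t = 0" unfolding h_def c_def by (simp add: lookup_minus)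
      have "\<And>w. w \<in> Poly_Mapping.keys h \<Longrightarrow> ord w t \<and> w \<noteq> t"
      proof -
        fix w assume w: "w \<in> Poly_Mapping.keys h"
        then have wt: "w \<noteq> t" using ht by (auto simp: in_keys_iff)
        have "w \<in> Poly_Mapping.keys f \<or> w \<in> Poly_Mapping.keys q" using w keys_diff[of f q] unfolding h_def by blast
        then have "ord w t"
        proof
          assume "w \<in> Poly_Mapping.keys f" then show ?thesis using fle by blast
        next
          assume "w \<in> Poly_Mapping.keys q"
          then obtain b where b: "b \<in> Poly_Mapping.keys g" "w = s + b"
            using keys_single_mult[of s d g] unfolding q_def by blast
          have "ord (b + s) (u + s)" using mo_props(6)[OF mo gle[OF b(1)]] .
          then show ?thesis using b(2) tsu by (simp add: add.commute)
        qed
        then show "ord w t \<and> w \<noteq> t" using wt by blast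
      qed
      then obtain r where r: "h - r \<in> J" "NF ord J r" using IH by blast
      have eq: "f - r = (h - r) + q" unfolding h_def by simp
      have "f - r \<in> J" unfolding eq using ideal_add[OF J r(1) qJ] .
      then show ?thesis using r(2) by blast
    next
      case False
      define h where "h = f - Poly_Mapping.single t c"
      have ht: "Poly_Mapping.lookup h t = 0" unfolding h_def c_def by (simp add: lookup_minus)
      have "\<And>w. w \<in> Poly_Mapping.keys h \<Longrightarrow> ord w t \<and> w \<noteq> t"
      proof -
        fix w assume w: "w \<in> Poly_Mapping.keys h"
        then have wt: "w \<noteq> t" using ht by (auto simp: in_keys_iff)
        have "w \<in> Poly_Mapping.keys f \<or> w = t" using w keys_diff[of f "Poly_Mapping.single t c"] unfolding h_def
          by (auto split: if_splits)
        then have "w \<in> Poly_Mapping.keys f" using wt by blast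
        then show "ord w t \<and> w \<noteq> t" using fle wt by blast
      qed
      then obtain r where r: "h - r \<in> J" "NF ord J r" using IH by blast
      have eq: "f - (r + Poly_Mapping.single t c) = h - r" unfolding h_def by (simp add: algebra_simps)
      have "f - (r + Poly_Mapping.single t c) \<in> J" unfolding eq using r(1) .
      moreover have "NF ord J (r + Poly_Mapping.single t c)"
        unfolding NF_def
      proof
        fix w assume "w \<in> Poly_Mapping.keys (r + Poly_Mapping.single t c)"
        then have "w \<in> Poly_Mapping.keys r \<or> w = t" using keys_add[of r "Poly_Mapping.single t c"]
          by (auto split: if_splits)
        then show "\<not> (\<exists>u\<in>LT ord J. monom_dvd u w)" using r(2) False unfolding NF_def by blast
      qed
      ultimately show ?thesis by blast
    qed
  qed
qed

lemma normal_form: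
  fixes J :: "('v::finite, 'a::field) mpoly set"
  assumes mo: "monomial_order ord" and J: "is_ideal J"
  shows "\<exists>r. f - r \<in> J \<and> NF ord J r"
proof (cases "f = 0")
  case True
  then show ?thesis using ideal_0[OF J] by (intro exI[of _ 0]) (simp add: NF_def)
next
  case False
  then show ?thesis using normal_form_aux[OF mo J, of "lead_monom ord f"] by blast
qed



lemma min_exists:
  fixes P :: "('v::finite) monom set" and ord :: "'v monom \<Rightarrow> 'v monom \<Rightarrow> bool"
  assumes mo: "monomial_order ord" and w: "w \<in> P"
  shows "\<exists>u\<in>P. monom_dvd u w \<and> (\<forall>v\<in>P. monom_dvd v u \<longrightarrow> v = u)"
proof -
  have wQ: "w \<in> {u \<in> P. monom_dvd u w}" using w monom_dvd_refl by blast
  obtain z where z: "z \<in> {u \<in> P. monom_dvd u w}"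
    and zmin: "\<And>y. (y, z) \<in> {(a, b). ord a b \<and> a \<noteq> b} \<Longrightarrow> y \<notin> {u \<in> P. monom_dvd u w}"
    by (rule wfE_min[OF ord_wf[OF mo] wQ]) blast
  have "\<forall>v\<in>P. monom_dvd v z \<longrightarrow> v = z"
  proof (intro ballI impI)
    fix v assume v: "v \<in> P" "monom_dvd v z"
    then have "v \<in> {u \<in> P. monom_dvd u w}" using z monom_dvd_trans by blast
    moreover have "ord v z" using monom_dvd_ord[OF mo v(2)] .
    ultimately show "v = z" using zmin[of v] by blast
  qed
  then show ?thesis using z by blast
qed

lemma antichain_finite:
  fixes P :: "('v::finite) monom set"
  shows "finite {u. u \<in> P \<and> (\<forall>v\<in>P. monom_dvd v u \<longrightarrow> v = u)}" (is "finite ?M")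
proof (rule ccontr)
  assume "infinite ?M"
  then obtain f :: "nat \<Rightarrow> 'v monom" where f: "inj f" "range f \<subseteq> ?M"
    using infinite_countable_subset by blast
  obtain i j where ij: "i < j" "monom_dvd (f i) (f j)" using dickson[of f] by blast
  have "f j \<in> ?M" "f i \<in> P" using f(2) by auto
  then have "f i = f j" using ij(2) by blast
  then show False using f(1) ij(1) by (simp add: inj_eq)
qed

lemma min_gens_finite:
  fixes E :: "('v::finite, 'a::field) mpoly set"
  shows "finite (min_gens E)"
proof -
  let ?P = "{u. (monom_poly u :: ('v, 'a) mpoly) \<in> E}"
  have "min_gens E = monom_poly ` {u. u \<in> ?P \<and> (\<forall>v\<in>?P. monom_dvd v u \<longrightarrow> v = u)}"
    unfolding min_gens_def by auto
  then show ?thesis using antichain_finite[of ?P] by simp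
qed

lemma init_mono: "I \<subseteq> I' \<Longrightarrow> init_ideal ord I \<subseteq> init_ideal ord I'"
  unfolding init_ideal_def by (rule ideal_gen_mono) blast

lemma init_ideal_is_ideal: "is_ideal (init_ideal ord I)"
  unfolding init_ideal_def by (rule ideal_gen_ideal)

lemma lead_in_init:
  fixes I :: "('v, 'a::field) mpoly set"
  assumes "f \<in> I" "f \<noteq> 0"
  shows "(monom_poly (lead_monom ord f) :: ('v, 'a) mpoly) \<in> init_ideal ord I"
proof -
  have "(monom_poly (lead_monom ord f) :: ('v, 'a) mpoly) \<in> {monom_poly (lead_monom ord f) | f. f \<in> I \<and> f \<noteq> 0}"
    using assms by blast
  then show ?thesis unfolding init_ideal_def by (rule subsetD[OF ideal_gen_sub])
qed

lemma lt_in_init: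
  fixes I :: "('v, 'a::field) mpoly set"
  assumes "u \<in> LT ord I" "monom_dvd u t"
  shows "(monom_poly t :: ('v, 'a) mpoly) \<in> init_ideal ord I"
  unfolding init_ideal_mideal mideal_monom using assms by (rule bexI[rotated])



lemma gnice_monom:
  fixes J Ei :: "('v::finite, 'a::field) mpoly set"
  assumes mo: "monomial_order ord" and gn: "g_nice ord J Ei" and Ei: "Ei = mideal U"
    and t: "(monom_poly t :: ('v, 'a) mpoly) \<in> init_ideal ord (ideal_sum J Ei)"
  shows "(\<exists>u\<in>LT ord J. monom_dvd u t) \<or> (monom_poly t :: ('v, 'a) mpoly) \<in> Ei"
proof -
  have "(monom_poly t :: ('v, 'a) mpoly) \<in> ideal_sum (mideal (LT ord J)) (mideal (LT ord Ei))"
    using t gn unfolding g_nice_def by (simp add: init_ideal_mideal)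
  then have "(monom_poly t :: ('v, 'a) mpoly) \<in> mideal (LT ord J) \<or> (monom_poly t :: ('v, 'a) mpoly) \<in> mideal (LT ord Ei)"
    by (rule mideal_sum_monom)
  then show ?thesis
  proof
    assume "(monom_poly t :: ('v, 'a) mpoly) \<in> mideal (LT ord J)"
    then show ?thesis unfolding mideal_monom by (rule disjI1)
  next
    assume "(monom_poly t :: ('v, 'a) mpoly) \<in> mideal (LT ord Ei)"
    then obtain u where u: "u \<in> LT ord Ei" "monom_dvd u t" unfolding mideal_monom by blast
    then obtain e where e: "e \<in> Ei" "e \<noteq> 0" "u = lead_monom ord e" unfolding LT_def by blast
    have "u \<in> Poly_Mapping.keys e" using lead_props(1)[OF mo e(2)] e(3) by simp
    then obtain u' where u': "u' \<in> U" "monom_dvd u' u" using e(1) Ei unfolding mideal_def by blast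
    have "monom_dvd u' t" using monom_dvd_trans[OF u'(2) u(2)] .
    then have "(monom_poly t :: ('v, 'a) mpoly) \<in> Ei" unfolding Ei mideal_monom using u'(1) by blast
    then show ?thesis by (rule disjI2)
  qed
qed

lemma nf_in_monomial:
  fixes J Ei :: "('v::finite, 'a::field) mpoly set"
  assumes mo: "monomial_order ord" and J: "is_ideal J" and gn: "g_nice ord J Ei" and Ei: "Ei = mideal U"
    and r: "r \<in> ideal_sum J Ei" and nf: "NF ord J r"
  shows "r \<in> Ei"
proof (rule ccontr)
  assume rE: "r \<notin> Ei"
  have EiI: "is_ideal Ei" unfolding Ei by (rule mideal_ideal)
  define B where "B = {w \<in> Poly_Mapping.keys r. (monom_poly w :: ('v, 'a) mpoly) \<notin> Ei}"
  have Bk: "B \<subseteq> Poly_Mapping.keys r" unfolding B_def by blast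
  have "B \<noteq> {}"
  proof
    assume "B = {}"
    then have "\<forall>w\<in>Poly_Mapping.keys r. (monom_poly w :: ('v, 'a) mpoly) \<in> mideal U" unfolding B_def Ei by blast
    then have "r \<in> mideal U" by (subst mideal_keys)
    then show False using rE Ei by simp
  qed
  define r2 where "r2 = (\<Sum>w\<in>B. Poly_Mapping.single w (Poly_Mapping.lookup r w))"
  have lr2: "Poly_Mapping.lookup r2 k = (if k \<in> B then Poly_Mapping.lookup r k else 0)" for k
  proof -
    have "Poly_Mapping.lookup r2 k = (\<Sum>w\<in>B. (if k = w then Poly_Mapping.lookup r w else 0))"
      unfolding r2_def lookup_sum lookup_single when_def by (simp add: eq_commute)
    also have "\<dots> = (if k \<in> B then Poly_Mapping.lookup r k else 0)"
      using sum.delta'[of B k "\<lambda>w. Poly_Mapping.lookup r w"] finite_subset[OF Bk finite_keys] by simp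
    finally show ?thesis .
  qed
  have kr2: "Poly_Mapping.keys r2 = B"
  proof
    show "Poly_Mapping.keys r2 \<subseteq> B" using lr2 by (auto simp: in_keys_iff split: if_splits)
    show "B \<subseteq> Poly_Mapping.keys r2" using lr2 Bk by (auto simp: in_keys_iff)
  qed
  define r1 where "r1 = r - r2"
  have "\<forall>w\<in>Poly_Mapping.keys r1. (monom_poly w :: ('v, 'a) mpoly) \<in> mideal U"
  proof
    fix w assume w: "w \<in> Poly_Mapping.keys r1"
    have "Poly_Mapping.lookup r1 w = (if w \<in> B then 0 else Poly_Mapping.lookup r w)"
      unfolding r1_def lookup_minus lr2 by simp
    then have "w \<notin> B" "w \<in> Poly_Mapping.keys r" using w by (auto simp: in_keys_iff split: if_splits)
    then show "(monom_poly w :: ('v, 'a) mpoly) \<in> mideal U" unfolding B_def Ei by blast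
  qed
  then have "r1 \<in> mideal U" by (subst mideal_keys)
  then have r1E: "r1 \<in> ideal_sum J Ei" using ideal_sum_right[OF J] Ei by blast
  have "r2 = r - r1" unfolding r1_def by simp
  then have r2I: "r2 \<in> ideal_sum J Ei" using ideal_diff[OF is_ideal_sum[OF J EiI] r r1E] by simp
  have r2nz: "r2 \<noteq> 0" using \<open>B \<noteq> {}\<close> kr2 by auto
  define t where "t = lead_monom ord r2"
  have tB: "t \<in> B" using lead_props(1)[OF mo r2nz] kr2 unfolding t_def by simp
  have "(monom_poly t :: ('v, 'a) mpoly) \<in> init_ideal ord (ideal_sum J Ei)"
    unfolding t_def by (rule lead_in_init[OF r2I r2nz])
  then have "(\<exists>u\<in>LT ord J. monom_dvd u t) \<or> (monom_poly t :: ('v, 'a) mpoly) \<in> Ei"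
    by (rule gnice_monom[OF mo gn Ei])
  then show False
  proof
    assume "\<exists>u\<in>LT ord J. monom_dvd u t"
    moreover have "t \<in> Poly_Mapping.keys r" using tB Bk by blast
    ultimately show False using nf unfolding NF_def by blast
  next
    assume "(monom_poly t :: ('v, 'a) mpoly) \<in> Ei"
    then show False using tB unfolding B_def by blast
  qed
qed



theorem mainTheorem6:
  fixes ord :: "('v::finite) monom \<Rightarrow> 'v monom \<Rightarrow> bool"
    and J :: "('v, 'a::field) mpoly set"
    and \<Lambda> :: "'i set"
    and Es :: "'i \<Rightarrow> ('v, 'a) mpoly set"
  assumes "monomial_order ord"
    and "is_ideal J"
    and "\<Lambda> \<noteq> {}"
    and "\<And>i. i \<in> \<Lambda> \<Longrightarrow> monomial_ideal (Es i)"
    and "\<And>i. i \<in> \<Lambda> \<Longrightarrow> g_nice ord J (Es i)"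
  shows "g_nice ord J (\<Inter>i\<in>\<Lambda>. Es i) \<and>
         (\<Inter>i\<in>\<Lambda>. ideal_sum J (Es i)) = ideal_sum J (\<Inter>i\<in>\<Lambda>. Es i) \<and>
         (\<forall>GJ. groebner_basis ord GJ J \<longrightarrow>
           groebner_basis ord (GJ \<union> min_gens (\<Inter>i\<in>\<Lambda>. Es i)) (\<Inter>i\<in>\<Lambda>. ideal_sum J (Es i)))"
proof -
  note mo = assms(1) and J = assms(2) and gn = assms(5)
  obtain U where U: "\<And>i. i \<in> \<Lambda> \<Longrightarrow> Es i = mideal (U i)"
  proof -
    have "\<forall>i\<in>\<Lambda>. \<exists>V. Es i = mideal V"
      using assms(4) unfolding monomial_ideal_def by (auto simp: ideal_gen_monoms)
    then have "\<exists>U. \<forall>i\<in>\<Lambda>. Es i = mideal (U i)" by (rule bchoice)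
    then show ?thesis using that by blast
  qed
  define E where "E = (\<Inter>i\<in>\<Lambda>. Es i)"
  have EsI: "\<And>i. i \<in> \<Lambda> \<Longrightarrow> is_ideal (Es i)" using U mideal_ideal by metis
  have EI: "is_ideal E" unfolding E_def by (rule ideal_Inter[OF EsI])
  have EsubEs: "\<And>i. i \<in> \<Lambda> \<Longrightarrow> E \<subseteq> Es i" unfolding E_def by blast
  have eqI: "(\<Inter>i\<in>\<Lambda>. ideal_sum J (Es i)) = ideal_sum J E"
  proof
    show "(\<Inter>i\<in>\<Lambda>. ideal_sum J (Es i)) \<subseteq> ideal_sum J E"
    proof
      fix f :: "('v, 'a) mpoly" assume f: "f \<in> (\<Inter>i\<in>\<Lambda>. ideal_sum J (Es i))"
      obtain r where r: "f - r \<in> J" "NF ord J r" using normal_form[OF mo J, of f] by blast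
      have "r \<in> Es i" if i: "i \<in> \<Lambda>" for i
      proof (rule nf_in_monomial[OF mo J gn[OF i] U[OF i] _ r(2)])
        have I: "is_ideal (ideal_sum J (Es i))" using is_ideal_sum[OF J EsI[OF i]] .
        have "f \<in> ideal_sum J (Es i)" using f i by blast
        moreover have "f - r \<in> ideal_sum J (Es i)" using r(1) ideal_sum_left[OF EsI[OF i]] by blast
        ultimately have "f - (f - r) \<in> ideal_sum J (Es i)" by (rule ideal_diff[OF I])
        then show "r \<in> ideal_sum J (Es i)" by simp
      qed
      then have "r \<in> E" unfolding E_def by blast
      moreover have "f = (f - r) + r" by simp
      ultimately show "f \<in> ideal_sum J E" using r(1) unfolding ideal_sum_def by blast
    qed
  next
    show "ideal_sum J E \<subseteq> (\<Inter>i\<in>\<Lambda>. ideal_sum J (Es i))"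
      using ideal_sum_mono[OF EsubEs] by blast
  qed
  have sumI: "is_ideal (ideal_sum (init_ideal ord J) (init_ideal ord E))"
    by (rule is_ideal_sum[OF init_ideal_is_ideal init_ideal_is_ideal])
  have gnE: "g_nice ord J E"
    unfolding g_nice_def
  proof
    show "init_ideal ord (ideal_sum J E) \<subseteq> ideal_sum (init_ideal ord J) (init_ideal ord E)"
      unfolding init_ideal_def[of ord "ideal_sum J E"]
    proof (rule ideal_gen_least[OF sumI])
      show "{monom_poly (lead_monom ord f) |f. f \<in> ideal_sum J E \<and> f \<noteq> 0}
              \<subseteq> ideal_sum (init_ideal ord J) (init_ideal ord E)"
      proof
        fix p :: "('v, 'a) mpoly" assume "p \<in> {monom_poly (lead_monom ord f) |f. f \<in> ideal_sum J E \<and> f \<noteq> 0}"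
        then obtain f where f: "p = monom_poly (lead_monom ord f)" "f \<in> ideal_sum J E" "f \<noteq> 0" by blast
        define t where "t = lead_monom ord f"
        have alt: "(\<exists>u\<in>LT ord J. monom_dvd u t) \<or> (monom_poly t :: ('v, 'a) mpoly) \<in> Es i" if i: "i \<in> \<Lambda>" for i
        proof (rule gnice_monom[OF mo gn[OF i] U[OF i]])
          have "f \<in> ideal_sum J (Es i)" using f(2) eqI i by blast
          then show "(monom_poly t :: ('v, 'a) mpoly) \<in> init_ideal ord (ideal_sum J (Es i))"
            unfolding t_def using f(3) by (rule lead_in_init)
        qed
        show "p \<in> ideal_sum (init_ideal ord J) (init_ideal ord E)"
        proof (cases "\<exists>u\<in>LT ord J. monom_dvd u t")
          case True
          then obtain u where "u \<in> LT ord J" "monom_dvd u t" by blast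
          then have "(monom_poly t :: ('v, 'a) mpoly) \<in> init_ideal ord J" by (rule lt_in_init)
          then show ?thesis using f(1) ideal_sum_left[OF init_ideal_is_ideal] unfolding t_def by blast
        next
          case False
          then have "(monom_poly t :: ('v, 'a) mpoly) \<in> E" using alt unfolding E_def by blast
          then have "(monom_poly (lead_monom ord (monom_poly t :: ('v, 'a) mpoly)) :: ('v, 'a) mpoly) \<in> init_ideal ord E"
            by (rule lead_in_init) simp
          then have "(monom_poly t :: ('v, 'a) mpoly) \<in> init_ideal ord E" by (simp add: lead_monom_poly[OF mo])
          then show ?thesis using f(1) ideal_sum_right[OF init_ideal_is_ideal] unfolding t_def by blast
        qed
      qed
    qed
  next
    show "ideal_sum (init_ideal ord J) (init_ideal ord E) \<subseteq> init_ideal ord (ideal_sum J E)"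
    proof
      fix p :: "('v, 'a) mpoly" assume "p \<in> ideal_sum (init_ideal ord J) (init_ideal ord E)"
      then obtain a b where ab: "p = a + b" "a \<in> init_ideal ord J" "b \<in> init_ideal ord E"
        unfolding ideal_sum_def by blast
      have "a \<in> init_ideal ord (ideal_sum J E)" using ab(2) init_mono[OF ideal_sum_left[OF EI]] by blast
      moreover have "b \<in> init_ideal ord (ideal_sum J E)" using ab(3) init_mono[OF ideal_sum_right[OF J]] by blast
      ultimately show "p \<in> init_ideal ord (ideal_sum J E)" unfolding ab(1) by (rule ideal_add[OF init_ideal_is_ideal])
    qed
  qed
  have gb: "groebner_basis ord (GJ \<union> min_gens E) (ideal_sum J E)" if GJ: "groebner_basis ord GJ J" for GJ
  proof -
    have GJf: "finite GJ" and GJJ: "GJ \<subseteq> J"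
      and GJi: "ideal_gen {monom_poly (lead_monom ord g) | g. g \<in> GJ \<and> g \<noteq> 0} = init_ideal ord J"
      using GJ unfolding groebner_basis_def by auto
    let ?G = "GJ \<union> min_gens E"
    let ?LG = "{(monom_poly (lead_monom ord g) :: ('v, 'a) mpoly) | g. g \<in> ?G \<and> g \<noteq> 0}"
    have fin: "finite ?G" using GJf min_gens_finite[of E] by simp
    have mgE: "min_gens E \<subseteq> E" unfolding min_gens_def by blast
    have sub: "?G \<subseteq> ideal_sum J E" using GJJ ideal_sum_left[OF EI, of J] mgE ideal_sum_right[OF J, of E] by blast
    have LGI: "is_ideal (ideal_gen ?LG)" by (rule ideal_gen_ideal)
    have "ideal_gen ?LG = init_ideal ord (ideal_sum J E)"
    proof
      show "ideal_gen ?LG \<subseteq> init_ideal ord (ideal_sum J E)"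
      proof (rule ideal_gen_least[OF init_ideal_is_ideal])
        show "?LG \<subseteq> init_ideal ord (ideal_sum J E)"
        proof
          fix p :: "('v, 'a) mpoly" assume "p \<in> ?LG"
          then obtain g where g: "p = monom_poly (lead_monom ord g)" "g \<in> ?G" "g \<noteq> 0" by blast
          have "g \<in> ideal_sum J E" using g(2) sub by blast
          then show "p \<in> init_ideal ord (ideal_sum J E)" unfolding g(1) using g(3) by (rule lead_in_init)
        qed
      qed
    next
      have J1: "init_ideal ord J \<subseteq> ideal_gen ?LG"
        unfolding GJi[symmetric] by (rule ideal_gen_mono) blast
      have E1: "init_ideal ord E \<subseteq> ideal_gen ?LG"
        unfolding init_ideal_def[of ord E]
      proof (rule ideal_gen_least[OF LGI])
        show "{monom_poly (lead_monom ord f) |f. f \<in> E \<and> f \<noteq> 0} \<subseteq> ideal_gen ?LG"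
        proof
          fix p :: "('v, 'a) mpoly" assume "p \<in> {monom_poly (lead_monom ord f) |f. f \<in> E \<and> f \<noteq> 0}"
          then obtain e where e: "p = monom_poly (lead_monom ord e)" "e \<in> E" "e \<noteq> 0" by blast
          define w where "w = lead_monom ord e"
          have wk: "w \<in> Poly_Mapping.keys e" using lead_props(1)[OF mo e(3)] unfolding w_def .
          have "(monom_poly w :: ('v, 'a) mpoly) \<in> Es i" if i: "i \<in> \<Lambda>" for i
          proof -
            have "e \<in> mideal (U i)" using e(2) EsubEs[OF i] U[OF i] by blast
            then have "(monom_poly w :: ('v, 'a) mpoly) \<in> mideal (U i)" using wk mideal_keys by blast
            then show ?thesis using U[OF i] by simp
          qed
          then have wE: "w \<in> {u. (monom_poly u :: ('v, 'a) mpoly) \<in> E}" unfolding E_def by blast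
          obtain u where u: "u \<in> {u. (monom_poly u :: ('v, 'a) mpoly) \<in> E}" "monom_dvd u w"
            "\<forall>v\<in>{u. (monom_poly u :: ('v, 'a) mpoly) \<in> E}. monom_dvd v u \<longrightarrow> v = u"
            using min_exists[OF mo wE] by blast
          have "(monom_poly u :: ('v, 'a) mpoly) \<in> min_gens E" unfolding min_gens_def using u(1,3) by blast
          then have "(monom_poly (lead_monom ord (monom_poly u :: ('v, 'a) mpoly)) :: ('v, 'a) mpoly) \<in> ?LG"
            by auto
          then have "(monom_poly u :: ('v, 'a) mpoly) \<in> ideal_gen ?LG"
            using ideal_gen_sub[of ?LG] by (auto simp: lead_monom_poly[OF mo])
          then have "Poly_Mapping.single (w - u) (1::'a) * monom_poly u \<in> ideal_gen ?LG" by (rule ideal_mult[OF LGI])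
          moreover have "Poly_Mapping.single (w - u) (1::'a) * (monom_poly u :: ('v, 'a) mpoly) = monom_poly w"
            by (simp add: monom_poly_def mult_single dvd_diff_add[OF u(2)])
          ultimately show "p \<in> ideal_gen ?LG" unfolding e(1) w_def[symmetric] by simp
        qed
      qed
      show "init_ideal ord (ideal_sum J E) \<subseteq> ideal_gen ?LG"
      proof
        fix p :: "('v, 'a) mpoly" assume "p \<in> init_ideal ord (ideal_sum J E)"
        then have "p \<in> ideal_sum (init_ideal ord J) (init_ideal ord E)" using gnE unfolding g_nice_def by simp
        then obtain a b where ab: "p = a + b" "a \<in> init_ideal ord J" "b \<in> init_ideal ord E"
          unfolding ideal_sum_def by blast
        show "p \<in> ideal_gen ?LG" unfolding ab(1) using J1 E1 ab(2,3) ideal_add[OF LGI] by blast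
      qed
    qed
    then show ?thesis unfolding groebner_basis_def using fin sub by blast
  qed
  show ?thesis using gnE eqI gb unfolding E_def by simp
qed


end
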